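(* Let $\Gamma$ be a graph such that $\chi(\overline{\Gamma})=k$. Suppose $F$ is a bipartite graph on $k$ vertices which does not contain $K_{s,r}$ as a subgraph, for some integers $2\le s\le r$ with $r\ne 2$. Then $\Gamma$ has a subgraph $G$ with at least $e(\Gamma)e(F)/\binom{k}{2}$ edges that does not contain $K_{s,r}$ as an induced subgraph.
   Context: $\overline{\Gamma}$ is the complement of $\Gamma$ and $\chi$ denotes chromatic number. *)

theory Defs
  imports Complex_Main
begin

definition graph :: "'a set \<Rightarrow> 'a set set \<Rightarrow> bool" where
  "graph V E \<longleftrightarrow> finite V \<and> (\<forall>e\<in>E. \<exists>u v. e = {u, v} \<and> u \<in> V \<and> v \<in> V \<and> u \<noteq> v)"

definition all_pairs :: "'a set \<Rightarrow> 'a set set" where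
  "all_pairs V = {{u, v} | u v. u \<in> V \<and> v \<in> V \<and> u \<noteq> v}"

definition compl_edges :: "'a set \<Rightarrow> 'a set set \<Rightarrow> 'a set set" where
  "compl_edges V E = all_pairs V - E"

definition proper_colouring :: "'a set \<Rightarrow> 'a set set \<Rightarrow> nat \<Rightarrow> ('a \<Rightarrow> nat) \<Rightarrow> bool" where
  "proper_colouring V E k c \<longleftrightarrow> (\<forall>v\<in>V. c v < k) \<and> (\<forall>u\<in>V. \<forall>v\<in>V. {u, v} \<in> E \<longrightarrow> u \<noteq> v \<longrightarrow> c u \<noteq> c v)"

definition chromatic_number :: "'a set \<Rightarrow> 'a set set \<Rightarrow> nat" where
  "chromatic_number V E = (LEAST k. \<exists>c. proper_colouring V E k c)"

definition bipartite :: "'a set \<Rightarrow> 'a set set \<Rightarrow> bool" where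
  "bipartite V E \<longleftrightarrow> (\<exists>c. proper_colouring V E 2 c)"

definition subgraph :: "'a set \<Rightarrow> 'a set set \<Rightarrow> 'a set \<Rightarrow> 'a set set \<Rightarrow> bool" where
  "subgraph V' E' V E \<longleftrightarrow> V' \<subseteq> V \<and> E' \<subseteq> E \<and> graph V' E'"

definition contains_Ksr :: "nat \<Rightarrow> nat \<Rightarrow> 'a set \<Rightarrow> 'a set set \<Rightarrow> bool" where
  "contains_Ksr s r V E \<longleftrightarrow> (\<exists>S R. S \<subseteq> V \<and> R \<subseteq> V \<and> S \<inter> R = {} \<and> card S = s \<and> card R = r \<and>
      (\<forall>x\<in>S. \<forall>y\<in>R. {x, y} \<in> E))"

definition contains_induced_Ksr :: "nat \<Rightarrow> nat \<Rightarrow> 'a set \<Rightarrow> 'a set set \<Rightarrow> bool" where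
  "contains_induced_Ksr s r V E \<longleftrightarrow> (\<exists>S R. S \<subseteq> V \<and> R \<subseteq> V \<and> S \<inter> R = {} \<and> card S = s \<and> card R = r \<and>
      (\<forall>x\<in>S. \<forall>y\<in>R. {x, y} \<in> E) \<and>
      (\<forall>x\<in>S. \<forall>y\<in>S. {x, y} \<notin> E) \<and> (\<forall>x\<in>R. \<forall>y\<in>R. {x, y} \<notin> E))"

end

theory Submission
  imports Defs "HOL-Combinatorics.Permutations"
begin


lemma perm_fix_iff:
  assumes "i \<in> A"
  shows "(q permutes A \<and> q i = i) \<longleftrightarrow> q permutes (A - {i})"
proof
  assume "q permutes A \<and> q i = i"
  then show "q permutes (A - {i})"
    using permutes_superset[of q A "A - {i}"] by auto
next
  assume h: "q permutes (A - {i})"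
  then have "q permutes A" using permutes_subset[OF h] by blast
  moreover have "q i = i" using permutes_not_in[OF h] by auto
  ultimately show "q permutes A \<and> q i = i" by blast
qed

lemma card_perm_one:
  assumes "finite A" "i \<in> A" "a \<in> A"
  shows "card {p. p permutes A \<and> p i = a} = fact (card A - 1)"
proof -
  let ?f = "\<lambda>p. transpose a i \<circ> p"
  have "bij_betw ?f {p. p permutes A \<and> p i = a} {q. q permutes A \<and> q i = i}"
  proof (rule bij_betw_byWitness[where f' = ?f])
    show "\<forall>x\<in>{p. p permutes A \<and> p i = a}. ?f (?f x) = x"
      by (auto simp: fun_eq_iff)
    show "\<forall>x\<in>{q. q permutes A \<and> q i = i}. ?f (?f x) = x"
      by (auto simp: fun_eq_iff)
    show "?f ` {p. p permutes A \<and> p i = a} \<subseteq> {q. q permutes A \<and> q i = i}"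
      using assms by (auto intro!: permutes_compose permutes_swap_id)
    show "?f ` {q. q permutes A \<and> q i = i} \<subseteq> {p. p permutes A \<and> p i = a}"
      using assms by (auto intro!: permutes_compose permutes_swap_id)
  qed
  then have "card {p. p permutes A \<and> p i = a} = card {q. q permutes A \<and> q i = i}"
    by (rule bij_betw_same_card)
  also have "{q. q permutes A \<and> q i = i} = {q. q permutes (A - {i})}"
    using perm_fix_iff[OF assms(2)] by blast
  also have "card \<dots> = fact (card A - 1)"
    using assms by (intro card_permutations) auto
  finally show ?thesis .
qed

lemma card_perm_two:
  assumes "finite A" "i \<in> A" "a \<in> A" "j \<in> A" "b \<in> A" "i \<noteq> j" "a \<noteq> b"
  shows "card {p. p permutes A \<and> p i = a \<and> p j = b} = fact (card A - 2)"
proof -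
  let ?f = "\<lambda>p. transpose a i \<circ> p"
  let ?b = "transpose a i b"
  have "bij_betw ?f {p. p permutes A \<and> p i = a \<and> p j = b} {q. q permutes A \<and> q i = i \<and> q j = ?b}"
  proof (rule bij_betw_byWitness[where f' = ?f])
    show "\<forall>x\<in>{p. p permutes A \<and> p i = a \<and> p j = b}. ?f (?f x) = x"
      by (auto simp: fun_eq_iff)
    show "\<forall>x\<in>{q. q permutes A \<and> q i = i \<and> q j = ?b}. ?f (?f x) = x"
      by (auto simp: fun_eq_iff)
    show "?f ` {p. p permutes A \<and> p i = a \<and> p j = b} \<subseteq> {q. q permutes A \<and> q i = i \<and> q j = ?b}"
      using assms by (auto intro!: permutes_compose permutes_swap_id)
    show "?f ` {q. q permutes A \<and> q i = i \<and> q j = ?b} \<subseteq> {p. p permutes A \<and> p i = a \<and> p j = b}"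
      using assms by (auto intro!: permutes_compose permutes_swap_id simp: transpose_def)
  qed
  then have "card {p. p permutes A \<and> p i = a \<and> p j = b} = card {q. q permutes A \<and> q i = i \<and> q j = ?b}"
    by (rule bij_betw_same_card)
  also have "{q. q permutes A \<and> q i = i \<and> q j = ?b} = {q. q permutes (A - {i}) \<and> q j = ?b}"
    using perm_fix_iff[OF assms(2)] by blast
  also have "card \<dots> = fact (card (A - {i}) - 1)"
    using assms by (intro card_perm_one) (auto simp: transpose_def)
  also have "card (A - {i}) - 1 = card A - 2" using assms by simp
  finally show ?thesis .
qed


lemma same_colour_edge:
  assumes "proper_colouring V (compl_edges V E) k c" "x \<in> V" "y \<in> V" "x \<noteq> y" "c x = c y"
  shows "{x, y} \<in> E"
proof (rule ccontr)
  assume "{x, y} \<notin> E"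
  then have "{x, y} \<in> compl_edges V E" using assms unfolding compl_edges_def all_pairs_def by blast
  then show False using assms unfolding proper_colouring_def by blast
qed

lemma bip_no_triangle:
  assumes "bipartite VF EF" "a \<in> VF" "b \<in> VF" "d \<in> VF" "{a,b} \<in> EF" "{b,d} \<in> EF" "{a,d} \<in> EF"
    "a \<noteq> b" "b \<noteq> d" "a \<noteq> d"
  shows False
proof -
  obtain col where col: "proper_colouring VF EF 2 col" using assms(1) unfolding bipartite_def by blast
  have "col a \<noteq> col b" "col b \<noteq> col d" "col a \<noteq> col d" "col a < 2" "col b < 2" "col d < 2"
    using col assms unfolding proper_colouring_def by blast+
  then show False by linarith
qed

lemma induced_free:
  fixes c :: "'a \<Rightarrow> nat" and g :: "nat \<Rightarrow> 'b"
  assumes col: "proper_colouring V (compl_edges V E) k c"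
    and p: "p permutes {..<k}" and g: "inj_on g {..<k}" "g ` {..<k} = VF"
    and F: "graph VF EF" "bipartite VF EF" "\<not> contains_Ksr s r VF EF"
    and sr: "2 \<le> s" "3 \<le> r"
    and Ep: "Ep = {e\<in>E. \<forall>u v. e = {u,v} \<longrightarrow> c u = c v \<or> {g (p (c u)), g (p (c v))} \<in> EF}"
  shows "\<not> contains_induced_Ksr s r V Ep"
proof
  assume "contains_induced_Ksr s r V Ep"
  then obtain S R where SR: "S \<subseteq> V" "R \<subseteq> V" "S \<inter> R = {}" "card S = s" "card R = r"
    and cross: "\<forall>x\<in>S. \<forall>y\<in>R. {x, y} \<in> Ep"
    and indS: "\<forall>x\<in>S. \<forall>y\<in>S. {x, y} \<notin> Ep" and indR: "\<forall>x\<in>R. \<forall>y\<in>R. {x, y} \<notin> Ep"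
    unfolding contains_induced_Ksr_def by blast
  define \<phi> where "\<phi> x = g (p (c x))" for x
  have ck: "c x < k" if "x \<in> V" for x using col that unfolding proper_colouring_def by blast
  have pk: "p (c x) \<in> {..<k}" if "x \<in> V" for x using ck[OF that] permutes_in_image[OF p] by auto
  have phiV: "\<phi> x \<in> VF" if "x \<in> V" for x using pk[OF that] g unfolding \<phi>_def by auto
  have phi_inj: "c x = c y" if "x \<in> V" "y \<in> V" "\<phi> x = \<phi> y" for x y
  proof -
    have "p (c x) = p (c y)" using that pk g(1) unfolding \<phi>_def inj_on_def by blast
    then show ?thesis using permutes_inj[OF p] unfolding inj_def by blast
  qed
  have cinjS: "c x \<noteq> c y" if "x \<in> S" "y \<in> S" "x \<noteq> y" for x y
  proof
    assume "c x = c y"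
    then have "{x,y} \<in> E" using same_colour_edge[OF col] that SR by blast
    then have "{x,y} \<in> Ep" unfolding Ep using \<open>c x = c y\<close> by (auto simp: doubleton_eq_iff)
    then show False using indS that by blast
  qed
  have cinjR: "c x \<noteq> c y" if "x \<in> R" "y \<in> R" "x \<noteq> y" for x y
  proof
    assume "c x = c y"
    then have "{x,y} \<in> E" using same_colour_edge[OF col] that SR by blast
    then have "{x,y} \<in> Ep" unfolding Ep using \<open>c x = c y\<close> by (auto simp: doubleton_eq_iff)
    then show False using indR that by blast
  qed
  have crossc: "c x = c y \<or> {\<phi> x, \<phi> y} \<in> EF" if "x \<in> S" "y \<in> R" for x y
    using cross that unfolding Ep \<phi>_def by blast
  have diffc: "c x \<noteq> c y" if "x \<in> S" "y \<in> R" for x y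
  proof
    assume eq: "c x = c y"
    have "card S \<ge> 2" using sr SR by simp
    then have "card (S - {x}) \<ge> 1" using that by (simp add: card_Diff_singleton_if)
    then have "S - {x} \<noteq> {}" by (metis card.empty not_one_le_zero)
    then obtain x1 where x1: "x1 \<in> S" "x1 \<noteq> x" by blast
    have "card (R - {y}) \<ge> 2" using sr SR that by (simp add: card_Diff_singleton_if)
    then have "R - {y} \<noteq> {}" by (metis card.empty not_numeral_le_zero)
    then obtain y1 where y1: "y1 \<in> R - {y}" by blast
    have fR: "finite R" using sr SR by (metis card.infinite not_numeral_le_zero)
    have "card (R - {y} - {y1}) \<ge> 1" using \<open>card (R - {y}) \<ge> 2\<close> y1 fR by (simp add: card_Diff_singleton_if)
    then have "R - {y} - {y1} \<noteq> {}" by (metis card.empty not_one_le_zero)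
    then obtain y2 where "y2 \<in> R - {y} - {y1}" by blast
    then have y12: "y1 \<in> R - {y}" "y2 \<in> R - {y}" "y1 \<noteq> y2" using y1 by auto
    obtain y3 where y3: "y3 \<in> R" "y3 \<noteq> y" "c y3 \<noteq> c x1"
    proof (cases "c y1 = c x1")
      case True
      then have "c y2 \<noteq> c x1" using cinjR[of y1 y2] y12 by auto
      then show ?thesis using that y12 by blast
    next
      case False
      then show ?thesis using that y12 by blast
    qed
    have cx1: "c x1 \<noteq> c x" using cinjS x1 that by blast
    have cy3: "c y3 \<noteq> c x" using cinjR y3 that eq by metis
    have e1: "{\<phi> x1, \<phi> y} \<in> EF" using crossc[OF x1(1) that(2)] cx1 eq by auto
    have e2: "{\<phi> x1, \<phi> y3} \<in> EF" using crossc[OF x1(1) y3(1)] y3 by auto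
    have e3: "{\<phi> x, \<phi> y3} \<in> EF" using crossc[OF that(1) y3(1)] cy3 by auto
    have py: "\<phi> y = \<phi> x" unfolding \<phi>_def using eq by simp
    have V: "x \<in> V" "x1 \<in> V" "y3 \<in> V" using x1 y3 that SR by auto
    have d: "\<phi> x1 \<noteq> \<phi> x" "\<phi> x \<noteq> \<phi> y3" "\<phi> x1 \<noteq> \<phi> y3"
      using phi_inj[OF V(2) V(1)] phi_inj[OF V(1) V(3)] phi_inj[OF V(2) V(3)] cx1 cy3 y3(3) by auto
    show False
      using bip_no_triangle[OF F(2) phiV[OF V(2)] phiV[OF V(1)] phiV[OF V(3)]] e1 e2 e3 py d
      by (simp add: insert_commute)
  qed
  have edge: "{\<phi> x, \<phi> y} \<in> EF" if "x \<in> S" "y \<in> R" for x y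
    using crossc[OF that] diffc[OF that] by blast
  have loopfree: "a \<noteq> b" if "{a,b} \<in> EF" for a b
    using F(1) that unfolding graph_def by (metis doubleton_eq_iff)
  have "contains_Ksr s r VF EF"
    unfolding contains_Ksr_def
  proof (intro exI conjI)
    show "\<phi> ` S \<subseteq> VF" "\<phi> ` R \<subseteq> VF" using phiV SR by auto
    show "\<phi> ` S \<inter> \<phi> ` R = {}" using edge loopfree by fastforce
    have "inj_on \<phi> S" using phi_inj cinjS SR unfolding inj_on_def by blast
    then show "card (\<phi> ` S) = s" using SR by (simp add: card_image)
    have "inj_on \<phi> R" using phi_inj cinjR SR unfolding inj_on_def by blast
    then show "card (\<phi> ` R) = r" using SR by (simp add: card_image)
    show "\<forall>a\<in>\<phi> ` S. \<forall>b\<in>\<phi> ` R. {a, b} \<in> EF" using edge by blast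
  qed
  then show False using F(3) by blast
qed


lemma edge_form:
  assumes "graph V E" "e \<in> E"
  shows "\<exists>u v. e = {u, v} \<and> u \<in> V \<and> v \<in> V \<and> u \<noteq> v"
  using assms(1)[unfolded graph_def, THEN conjunct2, rule_format, OF assms(2)] .

lemma finE:
  assumes "graph VF EF"
  shows "finite EF"
proof -
  have "EF \<subseteq> Pow VF"
  proof
    fix e assume "e \<in> EF"
    then obtain u v where "e = {u,v}" "u \<in> VF" "v \<in> VF" using edge_form[OF assms] by blast
    then show "e \<in> Pow VF" by simp
  qed
  moreover have "finite VF" using assms unfolding graph_def by simp
  ultimately show ?thesis by (simp add: finite_subset)
qed

lemma edge_sub:
  assumes "graph VF EF" "e \<in> EF" shows "e \<subseteq> VF"
proof -
  obtain u v where "e = {u,v}" "u \<in> VF" "v \<in> VF" using edge_form[OF assms] by blast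
  then show ?thesis by simp
qed

lemma count_ordered:
  assumes "graph VF EF"
  shows "card {(x,y). x \<in> VF \<and> y \<in> VF \<and> {x,y} \<in> EF} = 2 * card EF"
proof -
  have fin: "finite EF" by (rule finE[OF assms])
  have eq: "{(x,y). x \<in> VF \<and> y \<in> VF \<and> {x,y} \<in> EF} = (\<Union>e\<in>EF. {(x,y). {x,y} = e})"
  proof
    show "{(x,y). x \<in> VF \<and> y \<in> VF \<and> {x,y} \<in> EF} \<subseteq> (\<Union>e\<in>EF. {(x,y). {x,y} = e})" by blast
    show "(\<Union>e\<in>EF. {(x,y). {x,y} = e}) \<subseteq> {(x,y). x \<in> VF \<and> y \<in> VF \<and> {x,y} \<in> EF}"
    proof
      fix z assume "z \<in> (\<Union>e\<in>EF. {(x,y). {x,y} = e})"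
      then obtain e x y where ex: "e \<in> EF" "z = (x,y)" "{x,y} = e" by blast
      have xy: "{x,y} \<in> EF" using ex(1) unfolding ex(3)[symmetric] .
      then have "{x,y} \<subseteq> VF" using edge_sub[OF assms] by blast
      note this xy
      then show "z \<in> {(x,y). x \<in> VF \<and> y \<in> VF \<and> {x,y} \<in> EF}" using ex(2) by simp
    qed
  qed
  have c2: "card {(x,y). {x,y} = e} = 2" if "e \<in> EF" for e
  proof -
    obtain u v where "e = {u,v}" "u \<noteq> v" using edge_form[OF assms \<open>e \<in> EF\<close>] by blast
    then have "{(x,y). {x,y} = e} = {(u,v),(v,u)}" by (auto simp: doubleton_eq_iff)
    then show ?thesis using \<open>u \<noteq> v\<close> by simp
  qed
  have fin2: "finite {(x,y). {x,y} = e}" if "e \<in> EF" for e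
    by (rule ccontr) (use c2[OF that] in simp)
  have "card (\<Union>e\<in>EF. {(x,y). {x,y} = e}) = (\<Sum>e\<in>EF. card {(x,y). {x,y} = e})"
  proof (rule card_UN_disjoint[OF fin])
    show "\<forall>e\<in>EF. finite {(x,y). {x,y} = e}" using fin2 by blast
    show "\<forall>e\<in>EF. \<forall>e'\<in>EF. e \<noteq> e' \<longrightarrow> {(x,y). {x,y} = e} \<inter> {(x,y). {x,y} = e'} = {}" by auto
  qed
  also have "\<dots> = (\<Sum>e\<in>EF. 2)" using c2 by simp
  finally show ?thesis using eq by simp
qed
lemma Ncount:
  assumes g: "bij_betw g {..<k} VF" and F: "graph VF EF" and ij: "i < k" "j < k" "i \<noteq> j"
  shows "card {p. p permutes {..<k} \<and> {g (p i), g (p j)} \<in> EF} = 2 * card EF * fact (k - 2)"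
proof -
  define h where "h = inv_into {..<k} g"
  define P where "P = {(x,y). x \<in> VF \<and> y \<in> VF \<and> {x,y} \<in> EF}"
  have hg: "h (g a) = a" if "a < k" for a using g that unfolding h_def bij_betw_def by (simp add: inv_into_f_f)
  have gh: "g (h x) = x" if "x \<in> VF" for x using g that unfolding h_def bij_betw_def by (simp add: f_inv_into_f)
  have hV: "h x < k" if "x \<in> VF" for x using g that unfolding h_def bij_betw_def by (metis inv_into_into lessThan_iff)
  have gV: "g a \<in> VF" if "a < k" for a using g that unfolding bij_betw_def by auto
  have loopfree: "x \<noteq> y" if "{x,y} \<in> EF" for x y
  proof -
    obtain u v where "{x,y} = {u,v}" "u \<noteq> v" using edge_form[OF F \<open>{x,y} \<in> EF\<close>] by blast
    then show ?thesis by (auto simp: doubleton_eq_iff)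
  qed
  define Q where "Q xy = {p. p permutes {..<k} \<and> p i = h (fst xy) \<and> p j = h (snd xy)}" for xy
  have eq: "{p. p permutes {..<k} \<and> {g (p i), g (p j)} \<in> EF} = (\<Union>xy\<in>P. Q xy)"
  proof (rule set_eqI, rule iffI)
    fix p assume "p \<in> {p. p permutes {..<k} \<and> {g (p i), g (p j)} \<in> EF}"
    then have p: "p permutes {..<k}" "{g (p i), g (p j)} \<in> EF" by auto
    have "p i < k" "p j < k" using permutes_in_image[OF p(1)] ij by auto
    then show "p \<in> (\<Union>xy\<in>P. Q xy)"
      using p hg gV unfolding P_def Q_def by (intro UN_I[of "(g (p i), g (p j))"]) auto
  next
    fix p assume "p \<in> (\<Union>xy\<in>P. Q xy)"
    then obtain x y where "(x,y) \<in> P" "p permutes {..<k}" "p i = h x" "p j = h y" unfolding Q_def by auto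
    then show "p \<in> {p. p permutes {..<k} \<and> {g (p i), g (p j)} \<in> EF}"
      unfolding P_def using gh by auto
  qed
  have finP: "finite P"
  proof -
    have "finite VF" using F unfolding graph_def by blast
    moreover have "P \<subseteq> VF \<times> VF" unfolding P_def by auto
    ultimately show ?thesis by (meson finite_SigmaI finite_subset)
  qed
  have "card (\<Union>xy\<in>P. Q xy) = (\<Sum>xy\<in>P. card (Q xy))"
  proof (rule card_UN_disjoint[OF finP])
    show "\<forall>xy\<in>P. finite (Q xy)"
      using finite_permutations[of "{..<k}"] unfolding Q_def by (auto intro: finite_subset[rotated])
    show "\<forall>xy\<in>P. \<forall>xy'\<in>P. xy \<noteq> xy' \<longrightarrow> Q xy \<inter> Q xy' = {}"
    proof (intro ballI impI)
      fix xy xy' assume a: "xy \<in> P" "xy' \<in> P" "xy \<noteq> xy'"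
      obtain x y x' y' where e: "xy = (x,y)" "xy' = (x',y')" by (cases xy, cases xy') auto
      have V: "x \<in> VF" "y \<in> VF" "x' \<in> VF" "y' \<in> VF" using a e unfolding P_def by auto
      have "h x \<noteq> h x' \<or> h y \<noteq> h y'" using a(3) e gh V by metis
      then show "Q xy \<inter> Q xy' = {}" using e unfolding Q_def by auto
    qed
  qed
  also have "\<dots> = (\<Sum>xy\<in>P. fact (k - 2))"
  proof (rule sum.cong[OF refl])
    fix xy assume "xy \<in> P"
    then obtain x y where xy: "xy = (x,y)" "x \<in> VF" "y \<in> VF" "{x,y} \<in> EF" unfolding P_def by blast
    have "h x \<noteq> h y" using gh xy loopfree by metis
    then show "card (Q xy) = fact (k - 2)"
      using card_perm_two[of "{..<k}" i "h x" j "h y"] xy ij hV unfolding Q_def by simp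
  qed
  also have "\<dots> = card P * fact (k - 2)" by simp
  also have "card P = 2 * card EF" unfolding P_def by (rule count_ordered[OF F])
  finally show ?thesis using eq by simp
qed


lemma card_EF_le:
  assumes "graph VF EF"
  shows "card EF \<le> card VF choose 2"
proof -
  have fin: "finite VF" using assms unfolding graph_def by simp
  have "EF \<subseteq> {B. B \<subseteq> VF \<and> card B = 2}"
  proof
    fix e assume "e \<in> EF"
    then obtain u v where "e = {u,v}" "u \<in> VF" "v \<in> VF" "u \<noteq> v" using edge_form[OF assms] by blast
    then show "e \<in> {B. B \<subseteq> VF \<and> card B = 2}" by simp
  qed
  then have "card EF \<le> card {B. B \<subseteq> VF \<and> card B = 2}"
    by (rule card_mono[rotated]) (simp add: fin)
  also have "\<dots> = card VF choose 2" by (rule n_subsets[OF fin])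
  finally show ?thesis .
qed

lemma exists_colouring:
  assumes "finite V"
  shows "\<exists>c. proper_colouring V E' (chromatic_number V E') c"
proof -
  obtain f where f: "bij_betw f V {0..<card V}" using ex_bij_betw_finite_nat[OF assms] by blast
  have "proper_colouring V E' (card V) f"
    unfolding proper_colouring_def
  proof (intro conjI ballI impI)
    fix v assume "v \<in> V" then show "f v < card V" using f unfolding bij_betw_def by auto
  next
    fix u v assume "u \<in> V" "v \<in> V" "u \<noteq> v"
    then show "f u \<noteq> f v" using f unfolding bij_betw_def inj_on_def by blast
  qed
  then have ex: "\<exists>k c. proper_colouring V E' k c" by blast
  show ?thesis unfolding chromatic_number_def using LeastI_ex[OF ex] .
qed

lemma average:
  fixes f :: "'p \<Rightarrow> real"
  assumes "finite P" "P \<noteq> {}" "(\<Sum>p\<in>P. f p) \<ge> real (card P) * m"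
  shows "\<exists>p\<in>P. f p \<ge> m"
proof (rule ccontr)
  assume "\<not> (\<exists>p\<in>P. f p \<ge> m)"
  then have "\<forall>p\<in>P. f p < m" by auto
  then have "(\<Sum>p\<in>P. f p) < (\<Sum>p\<in>P. m)" using assms by (intro sum_strict_mono) auto
  then show False using assms by simp
qed

theorem lemma2p1:
  fixes V :: "'a set" and E :: "'a set set"
    and VF :: "'b set" and EF :: "'b set set"
    and k s r :: nat
  assumes "graph V E"
    and "chromatic_number V (compl_edges V E) = k"
    and "graph VF EF" and "bipartite VF EF" and "card VF = k"
    and "\<not> contains_Ksr s r VF EF"
    and "2 \<le> s" and "s \<le> r" and "r \<noteq> 2"
  shows "\<exists>V' E'. subgraph V' E' V E \<and>
           real (card E') \<ge> real (card E) * real (card EF) / real (k choose 2) \<and>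
           \<not> contains_induced_Ksr s r V' E'"
proof (cases "k < 2")
  case True
  then have k0: "k choose 2 = 0" by simp
  have "subgraph V {} V E" using assms(1) unfolding subgraph_def graph_def by simp
  moreover have "\<not> contains_induced_Ksr s r V {}"
  proof
    assume "contains_induced_Ksr s r V {}"
    then obtain S R where "card S = s" "card R = r" "\<forall>x\<in>S. \<forall>y\<in>R. {x, y} \<in> ({}::'a set set)"
      unfolding contains_induced_Ksr_def by blast
    moreover have "S \<noteq> {}" "R \<noteq> {}" using calculation assms(7,8) by auto
    ultimately show False by blast
  qed
  moreover have "real (card E) * real (card EF) / real (k choose 2) \<le> real (card ({}::'a set set))"
    unfolding k0 by simp
  ultimately show ?thesis by blast
next
  case False
  then have k2: "k \<ge> 2" by simp
  have finV: "finite V" using assms(1) unfolding graph_def by simp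
  have finE: "finite E" by (rule finE[OF assms(1)])
  obtain c where col: "proper_colouring V (compl_edges V E) k c"
    using exists_colouring[OF finV, of "compl_edges V E"] assms(2) by blast
  have finVF: "finite VF" using assms(3) unfolding graph_def by simp
  obtain g where g: "bij_betw g {..<k} VF"
    using ex_bij_betw_nat_finite[OF finVF] assms(5) by (auto simp: atLeast0LessThan)
  have ck: "c x < k" if "x \<in> V" for x using col that unfolding proper_colouring_def by blast
  define Ep where "Ep p = {e\<in>E. \<forall>u v. e = {u,v} \<longrightarrow> c u = c v \<or> {g (p (c u)), g (p (c v))} \<in> EF}" for p :: "nat \<Rightarrow> nat"
  define Perms where "Perms = {p. p permutes {..<k}}"
  define m where "m = real (card EF) / real (k choose 2)"
  have finP: "finite Perms" unfolding Perms_def by (rule finite_permutations) simp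
  have cardP: "card Perms = fact k" unfolding Perms_def by (rule card_permutations) simp_all
  have kc2: "real (k choose 2) * 2 = real k * (real k - 1)"
  proof -
    have "even (k * (k - 1))" by auto
    then have "(k choose 2) * 2 = k * (k - 1)" by (simp add: choose_two)
    then have "real ((k choose 2) * 2) = real (k * (k - 1))" by (simp only:)
    then show ?thesis using k2 by (simp add: of_nat_diff)
  qed
  have factk: "(fact k :: real) = real k * (real k - 1) * fact (k - 2)"
  proof -
    obtain n where n: "k = Suc (Suc n)" using k2 by (metis add_2_eq_Suc le_Suc_ex)
    show ?thesis unfolding n by simp
  qed
  have kpos: "real (k choose 2) > 0" using k2 by simp
  have m1: "m \<le> 1" unfolding m_def using card_EF_le[OF assms(3)] assms(5) kpos by simp
  have m0: "m \<ge> 0" unfolding m_def by simp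
  have per_edge: "real (card {p\<in>Perms. e \<in> Ep p}) \<ge> fact k * m" if "e \<in> E" for e
  proof -
    obtain u v where uv: "e = {u,v}" "u \<in> V" "v \<in> V" "u \<noteq> v" using edge_form[OF assms(1) \<open>e \<in> E\<close>] by blast
    have mem: "e \<in> Ep p \<longleftrightarrow> (c u = c v \<or> {g (p (c u)), g (p (c v))} \<in> EF)" for p
    proof
      assume "e \<in> Ep p" then show "c u = c v \<or> {g (p (c u)), g (p (c v))} \<in> EF" unfolding Ep_def uv(1) by blast
    next
      assume h: "c u = c v \<or> {g (p (c u)), g (p (c v))} \<in> EF"
      have "c u' = c v' \<or> {g (p (c u')), g (p (c v'))} \<in> EF" if "{u,v} = {u',v'}" for u' v'
        using that h by (auto simp: doubleton_eq_iff insert_commute)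
      then show "e \<in> Ep p" unfolding Ep_def using that uv(1) by blast
    qed
    show ?thesis
    proof (cases "c u = c v")
      case True
      then have "{p\<in>Perms. e \<in> Ep p} = Perms" using mem by blast
      then show ?thesis using cardP m1 by simp
    next
      case False
      then have "{p\<in>Perms. e \<in> Ep p} = {p. p permutes {..<k} \<and> {g (p (c u)), g (p (c v))} \<in> EF}"
        using mem unfolding Perms_def by blast
      then have "card {p\<in>Perms. e \<in> Ep p} = 2 * card EF * fact (k - 2)"
        using Ncount[OF g assms(3) ck[OF uv(2)] ck[OF uv(3)] False] by simp
      then have "real (card {p\<in>Perms. e \<in> Ep p}) = 2 * real (card EF) * fact (k - 2)" by simp
      also have "\<dots> = fact k * m"
      proof -
        have "fact k * m = (real k * (real k - 1)) * fact (k-2) * real (card EF) / real (k choose 2)"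
          by (simp add: factk m_def)
        also have "\<dots> = (real (k choose 2) * 2) * fact (k-2) * real (card EF) / real (k choose 2)"
          by (simp only: kc2)
        also have "\<dots> = 2 * real (card EF) * fact (k - 2)" using kpos by simp
        finally show ?thesis by simp
      qed
      finally show ?thesis by simp
    qed
  qed
  have sum_eq: "(\<Sum>p\<in>Perms. real (card (Ep p))) = (\<Sum>e\<in>E. real (card {p\<in>Perms. e \<in> Ep p}))"
  proof -
    have "card (Ep p) = (\<Sum>e\<in>E. if e \<in> Ep p then 1 else 0)" for p
    proof -
      have "Ep p = {e\<in>E. e \<in> Ep p}" unfolding Ep_def by blast
      then have "card (Ep p) = (\<Sum>e\<in>{e\<in>E. e \<in> Ep p}. 1)" by simp
      also have "\<dots> = (\<Sum>e\<in>E. if e \<in> Ep p then 1 else 0)" by (rule sum.inter_filter[OF finE])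
      finally show ?thesis .
    qed
    moreover have "card {p\<in>Perms. e \<in> Ep p} = (\<Sum>p\<in>Perms. if e \<in> Ep p then 1 else 0)" for e
      by (simp add: sum.inter_filter[OF finP, symmetric])
    ultimately show ?thesis
      by (simp add: sum.swap[of _ Perms E] of_nat_sum)
  qed
  have "(\<Sum>p\<in>Perms. real (card (Ep p))) \<ge> real (card Perms) * (real (card E) * m)"
  proof -
    have "(\<Sum>e\<in>E. fact k * m) \<le> (\<Sum>e\<in>E. real (card {p\<in>Perms. e \<in> Ep p}))"
      by (rule sum_mono) (rule per_edge)
    then show ?thesis using sum_eq cardP by (simp add: algebra_simps)
  qed
  moreover have "Perms \<noteq> {}" using finP cardP by (metis card.empty fact_nonzero)
  ultimately obtain p where p: "p \<in> Perms" "real (card (Ep p)) \<ge> real (card E) * m"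
    using average[OF finP] by blast
  have sub: "subgraph V (Ep p) V E"
    unfolding subgraph_def graph_def using assms(1) unfolding graph_def Ep_def by blast
  have "\<not> contains_induced_Ksr s r V (Ep p)"
    by (rule induced_free[OF col _ _ _ assms(3) assms(4) assms(6) assms(7) _ Ep_def])
       (use p g assms(7,8,9) in \<open>auto simp: Perms_def bij_betw_def\<close>)
  then show ?thesis using sub p(2) unfolding m_def by (intro exI[of _ V] exI[of _ "Ep p"]) simp
qed
end
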